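(* Let $\mathcal I'$ be an SMI instance, $a^*$ an agent, and let $\mathcal I^{a^*}$ be the instance arising from $\mathcal I'$ by replacing the preference list of $a^*$ by an arbitrary strict order over an arbitrary set of agents of the opposite gender (reordering and extending it arbitrarily). Then there is at most one man $m$ and at most one woman $w$ such that $m,w\notin\mathrm{ma}(\mathcal I')$ and $m,w\in\mathrm{ma}(\mathcal I^{a^*})$.
   Context: In a Stable Marriage with Incomplete Lists (SMI) instance there are men $U$ and women $W$, and each agent has a strict preference list over a subset of the agents of opposite gender; $m,w$ are mutually acceptable if each appears in the other's list. A matching is a set of mutually acceptable man–woman pairs in which each agent appears at most once. A mutually acceptable pair $\{m,w\}$ blocks a matching $M$ if ($m$ is unassigned or prefers $w$ to his partner) and ($w$ is unassigned or prefers $m$ to her partner); $M$ is stable if no pair blocks it. By the Rural Hospitals Theorem all stable matchings of an SMI instance assign the same set of agents; $\mathrm{ma}(\mathcal I)$ denotes this set of agents matched in the stable matchings of $\mathcal I$. *)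

theory Defs
  imports Main
begin

text \<open>An SMI instance: disjoint finite sets U (men) and W (women) of agents of type 'a,
  and a preference function pref giving each agent a strict order (a distinct list,
  most preferred first) over a subset of the agents of the opposite gender.\<close>

definition smi_instance :: "'a set \<Rightarrow> 'a set \<Rightarrow> ('a \<Rightarrow> 'a list) \<Rightarrow> bool" where
  "smi_instance U W pref \<longleftrightarrow> finite U \<and> finite W \<and> U \<inter> W = {} \<and>
     (\<forall>m\<in>U. distinct (pref m) \<and> set (pref m) \<subseteq> W) \<and>
     (\<forall>w\<in>W. distinct (pref w) \<and> set (pref w) \<subseteq> U)"

definition mutually_acceptable :: "('a \<Rightarrow> 'a list) \<Rightarrow> 'a \<Rightarrow> 'a \<Rightarrow> bool" where
  "mutually_acceptable pref m w \<longleftrightarrow> w \<in> set (pref m) \<and> m \<in> set (pref w)"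

definition prefers :: "('a \<Rightarrow> 'a list) \<Rightarrow> 'a \<Rightarrow> 'a \<Rightarrow> 'a \<Rightarrow> bool" where
  "prefers pref a x y \<longleftrightarrow>
     (\<exists>i j. i < j \<and> j < length (pref a) \<and> pref a ! i = x \<and> pref a ! j = y)"

definition is_matching :: "'a set \<Rightarrow> 'a set \<Rightarrow> ('a \<Rightarrow> 'a list) \<Rightarrow> ('a \<times> 'a) set \<Rightarrow> bool" where
  "is_matching U W pref M \<longleftrightarrow> M \<subseteq> U \<times> W \<and>
     (\<forall>(m, w)\<in>M. mutually_acceptable pref m w) \<and>
     (\<forall>m w w'. (m, w) \<in> M \<and> (m, w') \<in> M \<longrightarrow> w = w') \<and>
     (\<forall>m m' w. (m, w) \<in> M \<and> (m', w) \<in> M \<longrightarrow> m = m')"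

definition matched :: "('a \<times> 'a) set \<Rightarrow> 'a \<Rightarrow> bool" where
  "matched M a \<longleftrightarrow> (\<exists>b. (a, b) \<in> M \<or> (b, a) \<in> M)"

definition blocks :: "'a set \<Rightarrow> 'a set \<Rightarrow> ('a \<Rightarrow> 'a list) \<Rightarrow> ('a \<times> 'a) set \<Rightarrow> 'a \<Rightarrow> 'a \<Rightarrow> bool" where
  "blocks U W pref M m w \<longleftrightarrow> m \<in> U \<and> w \<in> W \<and> mutually_acceptable pref m w \<and>
     (\<not> matched M m \<or> (\<exists>w'. (m, w') \<in> M \<and> prefers pref m w w')) \<and>
     (\<not> matched M w \<or> (\<exists>m'. (m', w) \<in> M \<and> prefers pref w m m'))"

definition stable :: "'a set \<Rightarrow> 'a set \<Rightarrow> ('a \<Rightarrow> 'a list) \<Rightarrow> ('a \<times> 'a) set \<Rightarrow> bool" where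
  "stable U W pref M \<longleftrightarrow> is_matching U W pref M \<and> (\<nexists>m w. blocks U W pref M m w)"

text \<open>ma(I): agents matched in the stable matchings (by the Rural Hospitals Theorem
  all stable matchings match the same agents, so "some" = "every").\<close>
definition ma :: "'a set \<Rightarrow> 'a set \<Rightarrow> ('a \<Rightarrow> 'a list) \<Rightarrow> 'a set" where
  "ma U W pref = {a. \<exists>M. stable U W pref M \<and> matched M a}"

end

theory Submission
  imports Defs
begin


lemma prefers_set: "prefers p a x y \<Longrightarrow> x \<in> set (p a) \<and> y \<in> set (p a)"
  unfolding prefers_def by auto

lemma prefers_irrefl: "distinct (p a) \<Longrightarrow> \<not> prefers p a x x"
  unfolding prefers_def using nth_eq_iff_index_eq by fastforce

lemma prefers_asym: "distinct (p a) \<Longrightarrow> prefers p a x y \<Longrightarrow> \<not> prefers p a y x"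
  unfolding prefers_def
  by (metis less_trans nth_eq_iff_index_eq order_less_asym)

lemma prefers_trans: "distinct (p a) \<Longrightarrow> prefers p a x y \<Longrightarrow> prefers p a y z \<Longrightarrow> prefers p a x z"
  unfolding prefers_def
  by (metis less_trans nth_eq_iff_index_eq)

lemma prefers_total: "x \<in> set (p a) \<Longrightarrow> y \<in> set (p a) \<Longrightarrow> x \<noteq> y \<Longrightarrow> prefers p a x y \<or> prefers p a y x"
  unfolding prefers_def in_set_conv_nth
  by (metis linorder_neqE_nat)



definition propo :: "('a \<Rightarrow> 'a list) \<Rightarrow> ('a \<times> 'a) set \<Rightarrow> 'a \<Rightarrow> 'a option" where
  "propo p R m = find (\<lambda>w. (m, w) \<notin> R) (p m)"

definition rejects :: "'a set \<Rightarrow> ('a \<Rightarrow> 'a list) \<Rightarrow> ('a \<times> 'a) set \<Rightarrow> 'a \<Rightarrow> 'a \<Rightarrow> bool" where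
  "rejects U p R m w \<longleftrightarrow> m \<in> U \<and> propo p R m = Some w \<and>
     (m \<notin> set (p w) \<or> (\<exists>m'\<in>U. propo p R m' = Some w \<and> prefers p w m' m))"

definition gsstep :: "'a set \<Rightarrow> ('a \<Rightarrow> 'a list) \<Rightarrow> ('a \<times> 'a) set \<Rightarrow> ('a \<times> 'a) set" where
  "gsstep U p R = R \<union> {(m, w). rejects U p R m w}"

definition gsinv :: "'a set \<Rightarrow> ('a \<Rightarrow> 'a list) \<Rightarrow> ('a \<times> 'a) set \<Rightarrow> bool" where
  "gsinv U p R \<longleftrightarrow> (\<forall>(m, w)\<in>R. m \<in> U \<and> w \<in> set (p m) \<and>
     (m \<in> set (p w) \<longrightarrow> (\<exists>b\<in>U. propo p R b = Some w \<and> prefers p w b m)))"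

lemma gsinvD: "gsinv U p R \<Longrightarrow> (m, w) \<in> R \<Longrightarrow> m \<in> U \<and> w \<in> set (p m) \<and>
     (m \<in> set (p w) \<longrightarrow> (\<exists>b\<in>U. propo p R b = Some w \<and> prefers p w b m))"
  unfolding gsinv_def by blast

lemma propo_Some: "propo p R m = Some w \<Longrightarrow> w \<in> set (p m) \<and> (m, w) \<notin> R"
  unfolding propo_def by (auto simp: find_Some_iff)

lemma propo_mono:
  assumes "propo p R b = Some w" "R \<subseteq> R'" "(b, w) \<notin> R'"
  shows "propo p R' b = Some w"
proof -
  from assms(1) obtain i where i: "i < length (p b)" "w = p b ! i" "\<forall>j<i. (b, p b ! j) \<in> R"
    unfolding propo_def find_Some_iff by auto
  show ?thesis unfolding propo_def find_Some_iff
    using i assms(2,3) by blast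
qed

lemma propo_before:
  assumes "propo p R m = Some w'" "distinct (p m)" "prefers p m w w'"
  shows "(m, w) \<in> R"
proof -
  from assms(1) obtain k where k: "k < length (p m)" "w' = p m ! k" "\<forall>j<k. (m, p m ! j) \<in> R"
    unfolding propo_def find_Some_iff by auto
  from assms(3) obtain i j where ij: "i < j" "j < length (p m)" "p m ! i = w" "p m ! j = w'"
    unfolding prefers_def by blast
  have "j = k" using nth_eq_iff_index_eq[OF assms(2) ij(2) k(1)] ij(4) k(2) by simp
  thus ?thesis using k(3) ij by auto
qed

lemma propo_None: "propo p R m = None \<Longrightarrow> w \<in> set (p m) \<Longrightarrow> (m, w) \<in> R"
  unfolding propo_def find_None_iff by blast

lemma best_exists:
  assumes "c \<in> U" "propo p R c = Some w" "c \<in> set (p w)" "distinct (p w)"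
  shows "\<exists>b\<in>U. propo p R b = Some w \<and> b \<in> set (p w) \<and>
           (\<forall>b'\<in>U. propo p R b' = Some w \<longrightarrow> \<not> prefers p w b' b)"
proof -
  define Q where "Q = (\<lambda>i. i < length (p w) \<and> p w ! i \<in> U \<and> propo p R (p w ! i) = Some w)"
  from assms(3) obtain i0 where "i0 < length (p w)" "p w ! i0 = c" by (auto simp: in_set_conv_nth)
  hence "Q i0" using assms(1,2) unfolding Q_def by simp
  hence "\<exists>i. Q i" by blast
  then obtain i where Qi: "Q i" and min: "\<forall>i'<i. \<not> Q i'" using exists_least_iff[of Q] by blast
  show ?thesis
  proof (intro bexI conjI ballI impI)
    show "p w ! i \<in> U" "propo p R (p w ! i) = Some w" "p w ! i \<in> set (p w)" using Qi unfolding Q_def by auto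
    fix b' assume "b' \<in> U" "propo p R b' = Some w"
    show "\<not> prefers p w b' (p w ! i)"
    proof
      assume "prefers p w b' (p w ! i)"
      then obtain i' j where "i' < j" "j < length (p w)" "p w ! i' = b'" "p w ! j = p w ! i"
        unfolding prefers_def by blast
      moreover have "j = i" using nth_eq_iff_index_eq[OF assms(4) calculation(2), of i] Qi calculation(4) unfolding Q_def by simp
      ultimately show False using min \<open>b' \<in> U\<close> \<open>propo p R b' = Some w\<close> unfolding Q_def by auto
    qed
  qed
qed

lemma best_survives:
  assumes "b \<in> U" "propo p R b = Some w" "b \<in> set (p w)"
    "\<forall>b'\<in>U. propo p R b' = Some w \<longrightarrow> \<not> prefers p w b' b"
  shows "propo p (gsstep U p R) b = Some w"
proof -
  have nr: "\<not> rejects U p R b w" unfolding rejects_def using assms(3,4) by blast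
  have "(b, w) \<notin> R" using propo_Some[OF assms(2)] by blast
  hence nin: "(b, w) \<notin> gsstep U p R" using nr by (simp add: gsstep_def)
  have "R \<subseteq> gsstep U p R" unfolding gsstep_def by (rule Un_upper1)
  thus ?thesis using propo_mono[OF assms(2) _ nin] by blast
qed

lemma gsinv_step:
  assumes inst: "smi_instance U W p" and inv: "gsinv U p R"
  shows "gsinv U p (gsstep U p R)"
  unfolding gsinv_def
proof (intro ballI, clarify)
  fix m w assume mw: "(m, w) \<in> gsstep U p R"
  have cases: "(m, w) \<in> R \<or> rejects U p R m w" using mw unfolding gsstep_def by blast
  have base: "m \<in> U \<and> w \<in> set (p m)"
    using cases
  proof
    assume "(m, w) \<in> R" thus ?thesis using gsinvD[OF inv] by blast
  next
    assume "rejects U p R m w" hence "propo p R m = Some w" "m \<in> U" unfolding rejects_def by auto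
    thus ?thesis using propo_Some[of p R m w] by blast
  qed
  have wW: "w \<in> W" using inst base unfolding smi_instance_def by blast
  hence dw: "distinct (p w)" using inst unfolding smi_instance_def by blast
  show "m \<in> U \<and> w \<in> set (p m) \<and> (m \<in> set (p w) \<longrightarrow>
          (\<exists>b\<in>U. propo p (gsstep U p R) b = Some w \<and> prefers p w b m))"
  proof (intro conjI impI)
    show "m \<in> U" "w \<in> set (p m)" using base by auto
    assume mpw: "m \<in> set (p w)"
    have "\<exists>c\<in>U. propo p R c = Some w \<and> prefers p w c m"
      using cases
    proof
      assume "(m, w) \<in> R" thus ?thesis using gsinvD[OF inv] mpw by blast
    next
      assume "rejects U p R m w" thus ?thesis unfolding rejects_def using mpw by blast
    qed
    then obtain c where c: "c \<in> U" "propo p R c = Some w" "prefers p w c m" by blast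
    have "c \<in> set (p w)" using prefers_set[OF c(3)] by simp
    from best_exists[OF c(1,2) this dw] obtain b where
      b: "b \<in> U" "propo p R b = Some w" "b \<in> set (p w)"
        "\<forall>b'\<in>U. propo p R b' = Some w \<longrightarrow> \<not> prefers p w b' b" by blast
    have "prefers p w b m"
    proof (cases "b = c")
      case True thus ?thesis using c by simp
    next
      case False
      hence "prefers p w b c" using prefers_total[of b p w c, OF b(3) \<open>c \<in> set (p w)\<close>] b(4) c by blast
      thus ?thesis using prefers_trans[of p w b c m, OF dw _ c(3)] by blast
    qed
    thus "\<exists>b\<in>U. propo p (gsstep U p R) b = Some w \<and> prefers p w b m"
      using best_survives[OF b] b(1) by blast
  qed
qed

lemma gsinv_bound: "gsinv U p R \<Longrightarrow> R \<subseteq> Sigma U (\<lambda>m. set (p m))"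
  unfolding gsinv_def by auto

lemma gs_fix_stable:
  assumes inst: "smi_instance U W p" and inv: "gsinv U p R" and fixp: "gsstep U p R = R"
  shows "\<exists>M. stable U W p M"
proof -
  have norej: "\<not> rejects U p R m w" for m w
  proof
    assume r: "rejects U p R m w"
    hence "(m, w) \<in> R" using fixp unfolding gsstep_def by blast
    thus False using r propo_Some unfolding rejects_def by fastforce
  qed
  define M where "M = {(m, w). m \<in> U \<and> propo p R m = Some w}"
  have MUW: "M \<subseteq> U \<times> W" using inst propo_Some unfolding M_def smi_instance_def by fastforce
  have acc: "m \<in> set (p w)" if "(m, w) \<in> M" for m w
    using norej[of m w] that unfolding M_def rejects_def by auto
  have wuniq: "m = m'" if "(m, w) \<in> M" "(m', w) \<in> M" for m m' w
  proof (rule ccontr)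
    assume ne: "m \<noteq> m'"
    have "prefers p w m m' \<or> prefers p w m' m" using prefers_total[of m p w m', OF acc[OF that(1)] acc[OF that(2)] ne] .
    thus False using norej[of m w] norej[of m' w] that unfolding M_def rejects_def by auto
  qed
  have match: "is_matching U W p M"
    unfolding is_matching_def mutually_acceptable_def
  proof (intro conjI allI impI ballI)
    show "M \<subseteq> U \<times> W" by fact
    show "\<And>x. x \<in> M \<Longrightarrow> case x of (m, w) \<Rightarrow> w \<in> set (p m) \<and> m \<in> set (p w)"
      using acc by (auto simp: M_def dest: propo_Some)
    show "\<And>m w w'. (m, w) \<in> M \<and> (m, w') \<in> M \<Longrightarrow> w = w'" unfolding M_def by auto
    show "\<And>m m' w. (m, w) \<in> M \<and> (m', w) \<in> M \<Longrightarrow> m = m'" using wuniq by blast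
  qed
  have nb: "\<not> blocks U W p M m w" for m w
  proof
    assume bl: "blocks U W p M m w"
    hence mU: "m \<in> U" and wW: "w \<in> W" and wm: "w \<in> set (p m)" and mw: "m \<in> set (p w)"
      unfolding blocks_def mutually_acceptable_def by auto
    have dm: "distinct (p m)" and dw: "distinct (p w)" using inst mU wW unfolding smi_instance_def by auto
    have inR: "(m, w) \<in> R"
    proof (cases "propo p R m")
      case None show ?thesis by (rule propo_None[OF None wm])
    next
      case (Some w')
      hence "(m, w') \<in> M" using mU unfolding M_def by auto
      hence "matched M m" unfolding matched_def by auto
      then obtain w'' where "(m, w'') \<in> M" "prefers p m w w''" using bl unfolding blocks_def by auto
      hence "w'' = w'" using Some unfolding M_def by auto
      thus ?thesis using propo_before[OF Some dm] \<open>prefers p m w w''\<close> by blast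
    qed
    then obtain b where b: "b \<in> U" "propo p R b = Some w" "prefers p w b m"
      using gsinvD[OF inv inR] mw by blast
    hence bM: "(b, w) \<in> M" unfolding M_def by auto
    hence "matched M w" unfolding matched_def by auto
    then obtain m' where "(m', w) \<in> M" "prefers p w m m'" using bl unfolding blocks_def by auto
    hence "m' = b" using wuniq bM by blast
    thus False using prefers_asym[OF dw b(3)] \<open>prefers p w m m'\<close> by simp
  qed
  have "stable U W p M" unfolding stable_def using match nb by simp
  thus ?thesis by (rule exI)
qed

lemma gs_exists_aux:
  assumes inst: "smi_instance U W p"
  shows "\<forall>R. gsinv U p R \<and> card (Sigma U (\<lambda>m. set (p m)) - R) = n \<longrightarrow> (\<exists>M. stable U W p M)"
proof (induction n rule: less_induct)
  case (less n)
  show ?case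
  proof (intro allI impI)
    fix R assume H: "gsinv U p R \<and> card (Sigma U (\<lambda>m. set (p m)) - R) = n"
    hence inv: "gsinv U p R" and cn: "card (Sigma U (\<lambda>m. set (p m)) - R) = n" by auto
    show "\<exists>M. stable U W p M"
    proof (cases "gsstep U p R = R")
      case True thus ?thesis using gs_fix_stable[OF inst inv] by blast
    next
      case False
      have inv': "gsinv U p (gsstep U p R)" using gsinv_step[OF inst inv] .
      have fin: "finite (Sigma U (\<lambda>m. set (p m)))" using inst unfolding smi_instance_def by auto
      have sub1: "R \<subseteq> gsstep U p R" unfolding gsstep_def by (rule Un_upper1)
      then obtain x where x: "x \<in> gsstep U p R" "x \<notin> R" using False by blast
      have bnd: "gsstep U p R \<subseteq> Sigma U (\<lambda>m. set (p m))" using gsinv_bound[OF inv'] .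
      have ps: "Sigma U (\<lambda>m. set (p m)) - gsstep U p R \<subset> Sigma U (\<lambda>m. set (p m)) - R"
      proof (rule psubsetI)
        show "Sigma U (\<lambda>m. set (p m)) - gsstep U p R \<subseteq> Sigma U (\<lambda>m. set (p m)) - R"
          using sub1 by blast
        show "Sigma U (\<lambda>m. set (p m)) - gsstep U p R \<noteq> Sigma U (\<lambda>m. set (p m)) - R"
        proof
          assume "Sigma U (\<lambda>m. set (p m)) - gsstep U p R = Sigma U (\<lambda>m. set (p m)) - R"
          moreover have "x \<in> Sigma U (\<lambda>m. set (p m)) - R" using x bnd by blast
          ultimately show False using x by blast
        qed
      qed
      have lt: "card (Sigma U (\<lambda>m. set (p m)) - gsstep U p R) < n"
        using psubset_card_mono[OF finite_Diff[OF fin] ps] cn by simp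
      have "\<forall>R'. gsinv U p R' \<and> card (Sigma U (\<lambda>m. set (p m)) - R') = card (Sigma U (\<lambda>m. set (p m)) - gsstep U p R)
           \<longrightarrow> (\<exists>M. stable U W p M)" by (rule less.IH[OF lt])
      thus ?thesis using inv' by blast
    qed
  qed
qed

lemma stable_exists: "smi_instance U W p \<Longrightarrow> \<exists>M. stable U W p M"
proof -
  assume inst: "smi_instance U W p"
  have "gsinv U p {}" unfolding gsinv_def by blast
  thus ?thesis using gs_exists_aux[OF inst] by blast
qed



definition mate :: "('a \<times> 'a) set \<Rightarrow> 'a \<Rightarrow> 'a" where
  "mate M x = (THE w. (x, w) \<in> M)"
definition mateW :: "('a \<times> 'a) set \<Rightarrow> 'a \<Rightarrow> 'a" where
  "mateW M w = (THE m. (m, w) \<in> M)"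
definition walk :: "('a \<times> 'a) set \<Rightarrow> ('a \<times> 'a) set \<Rightarrow> 'a \<Rightarrow> nat \<Rightarrow> 'a" where
  "walk M M' x0 k = ((\<lambda>x. mateW M (mate M' x)) ^^ k) x0"

lemma walk_0[simp]: "walk M M' x0 0 = x0" by (simp add: walk_def)
lemma walk_Suc[simp]: "walk M M' x0 (Suc k) = mateW M (mate M' (walk M M' x0 k))"
  by (simp add: walk_def)

lemma matching_uniq1: "is_matching U W p M \<Longrightarrow> (m, w) \<in> M \<Longrightarrow> (m, w') \<in> M \<Longrightarrow> w = w'"
  unfolding is_matching_def by blast
lemma matching_uniq2: "is_matching U W p M \<Longrightarrow> (m, w) \<in> M \<Longrightarrow> (m', w) \<in> M \<Longrightarrow> m = m'"
  unfolding is_matching_def by blast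
lemma matching_sub: "is_matching U W p M \<Longrightarrow> (m, w) \<in> M \<Longrightarrow> m \<in> U \<and> w \<in> W"
  unfolding is_matching_def by blast
lemma matching_acc: "is_matching U W p M \<Longrightarrow> (m, w) \<in> M \<Longrightarrow> w \<in> set (p m) \<and> m \<in> set (p w)"
  unfolding is_matching_def mutually_acceptable_def by blast

lemma mate_eq: "is_matching U W p M \<Longrightarrow> (x, w) \<in> M \<Longrightarrow> mate M x = w"
  unfolding mate_def by (rule the_equality) (auto dest: matching_uniq1)
lemma mateW_eq: "is_matching U W p M \<Longrightarrow> (m, w) \<in> M \<Longrightarrow> mateW M w = m"
  unfolding mateW_def by (rule the_equality) (auto dest: matching_uniq2)

lemma matched_man: "is_matching U W p M \<Longrightarrow> smi_instance U W q \<Longrightarrow> m \<in> U \<Longrightarrow> matched M m \<Longrightarrow> (m, mate M m) \<in> M"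
proof -
  assume a: "is_matching U W p M" "smi_instance U W q" "m \<in> U" "matched M m"
  from a(4) obtain b where "(m, b) \<in> M \<or> (b, m) \<in> M" unfolding matched_def by blast
  moreover have "(b, m) \<notin> M"
  proof
    assume "(b, m) \<in> M" hence "m \<in> W" using matching_sub[OF a(1)] by blast
    thus False using a(2,3) unfolding smi_instance_def by blast
  qed
  ultimately have "(m, b) \<in> M" by blast
  thus ?thesis using mate_eq[OF a(1)] by simp
qed

lemma matched_woman: "is_matching U W p M \<Longrightarrow> smi_instance U W q \<Longrightarrow> w \<in> W \<Longrightarrow> matched M w \<Longrightarrow> (mateW M w, w) \<in> M"
proof -
  assume a: "is_matching U W p M" "smi_instance U W q" "w \<in> W" "matched M w"
  from a(4) obtain b where "(w, b) \<in> M \<or> (b, w) \<in> M" unfolding matched_def by blast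
  moreover have "(w, b) \<notin> M"
  proof
    assume "(w, b) \<in> M" hence "w \<in> U" using matching_sub[OF a(1)] by blast
    thus False using a(2,3) unfolding smi_instance_def by blast
  qed
  ultimately have "(b, w) \<in> M" by blast
  thus ?thesis using mateW_eq[OF a(1)] by simp
qed

definition InvA :: "'a set \<Rightarrow> ('a \<times> 'a) set \<Rightarrow> ('a \<times> 'a) set \<Rightarrow> 'a \<Rightarrow> nat \<Rightarrow> bool" where
  "InvA U M M' x0 k \<longleftrightarrow> walk M M' x0 k \<in> U \<and> (k = 0 \<longrightarrow> \<not> matched M x0) \<and>
     (\<forall>j. k = Suc j \<longrightarrow> (walk M M' x0 k, mate M' (walk M M' x0 j)) \<in> M)"
definition InvB :: "('a \<Rightarrow> 'a list) \<Rightarrow> ('a \<times> 'a) set \<Rightarrow> ('a \<times> 'a) set \<Rightarrow> 'a \<Rightarrow> nat \<Rightarrow> bool" where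
  "InvB p M M' x0 k \<longleftrightarrow> (walk M M' x0 k, mate M' (walk M M' x0 k)) \<in> M' \<and>
     (\<forall>j. k = Suc j \<longrightarrow> prefers p (walk M M' x0 k) (mate M' (walk M M' x0 k)) (mate M' (walk M M' x0 j)))"

context
  fixes U W :: "'a set" and p p' :: "'a \<Rightarrow> 'a list" and S :: "'a set" and M M' :: "('a \<times> 'a) set"
  assumes inst: "smi_instance U W p" and inst': "smi_instance U W p'"
    and agree: "\<And>a. a \<notin> S \<Longrightarrow> p' a = p a"
    and st: "stable U W p M" and st': "stable U W p' M'"
begin

lemma ismM: "is_matching U W p M" using st unfolding stable_def by blast
lemma ismM': "is_matching U W p' M'" using st' unfolding stable_def by blast
lemma distU: "m \<in> U \<Longrightarrow> distinct (p m)" using inst unfolding smi_instance_def by blast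
lemma distW: "w \<in> W \<Longrightarrow> distinct (p w)" using inst unfolding smi_instance_def by blast
lemma disj: "x \<in> U \<Longrightarrow> x \<notin> W" using inst unfolding smi_instance_def by blast

lemma step1:
  assumes xU: "x \<in> U" and xw: "(x, w) \<in> M'" and xS: "x \<notin> S" and wS: "w \<notin> S"
    and A: "\<not> matched M x \<or> (\<exists>w0. (x, w0) \<in> M \<and> prefers p x w w0)"
  shows "(mateW M w, w) \<in> M \<and> prefers p w (mateW M w) x"
proof -
  have wW: "w \<in> W" using matching_sub[OF ismM' xw] by blast
  have acc': "w \<in> set (p' x) \<and> x \<in> set (p' w)" using matching_acc[OF ismM' xw] .
  hence acc: "mutually_acceptable p x w" unfolding mutually_acceptable_def using agree[OF xS] agree[OF wS] by simp
  have nb: "\<not> blocks U W p M x w" using st unfolding stable_def by blast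
  have B: "\<not> (\<not> matched M w \<or> (\<exists>m'. (m', w) \<in> M \<and> prefers p w x m'))"
    using nb A acc xU wW unfolding blocks_def by blast
  hence mw: "matched M w" by blast
  define y where "y = mateW M w"
  have yw: "(y, w) \<in> M" unfolding y_def using matched_woman[OF ismM inst wW mw] .
  have npr: "\<not> prefers p w x y" using B yw by blast
  have yx: "y \<noteq> x"
  proof
    assume "y = x"
    hence xwM: "(x, w) \<in> M" using yw by simp
    hence "matched M x" unfolding matched_def by blast
    then obtain w0 where "(x, w0) \<in> M" "prefers p x w w0" using A by blast
    moreover have "w0 = w" using matching_uniq1[OF ismM xwM calculation(1)] by simp
    ultimately show False using prefers_irrefl[of p x w, OF distU[OF xU]] by simp
  qed
  have ys: "y \<in> set (p w)" using matching_acc[OF ismM yw] by blast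
  have xs: "x \<in> set (p w)" using acc unfolding mutually_acceptable_def by blast
  have "prefers p w y x" using prefers_total[of y p w x, OF ys xs yx] npr by blast
  thus ?thesis using yw unfolding y_def by blast
qed

lemma step2:
  assumes yw: "(y, w) \<in> M" and xw: "(x, w) \<in> M'" and pr: "prefers p w y x" and yS: "y \<notin> S" and wS: "w \<notin> S"
  shows "(y, mate M' y) \<in> M' \<and> prefers p y (mate M' y) w"
proof -
  have yU: "y \<in> U" and wW: "w \<in> W" using matching_sub[OF ismM yw] by auto
  have acc: "w \<in> set (p y) \<and> y \<in> set (p w)" using matching_acc[OF ismM yw] .
  hence acc': "mutually_acceptable p' y w" unfolding mutually_acceptable_def using agree[OF yS] agree[OF wS] by simp
  have nb: "\<not> blocks U W p' M' y w" using st' unfolding stable_def by blast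
  have Bw: "matched M' w \<and> (\<exists>m'. (m', w) \<in> M' \<and> prefers p' w y m')"
  proof -
    have "prefers p' w y x" using pr agree[OF wS] unfolding prefers_def by simp
    thus ?thesis using xw unfolding matched_def by blast
  qed
  have A: "\<not> (\<not> matched M' y \<or> (\<exists>w'. (y, w') \<in> M' \<and> prefers p' y w w'))"
    using nb Bw acc' yU wW unfolding blocks_def by blast
  hence my: "matched M' y" by blast
  define w'' where "w'' = mate M' y"
  have yw'': "(y, w'') \<in> M'" unfolding w''_def using matched_man[OF ismM' inst yU my] .
  have npr: "\<not> prefers p y w w''"
  proof
    assume "prefers p y w w''"
    hence "prefers p' y w w''" using agree[OF yS] unfolding prefers_def by simp
    thus False using A yw'' by blast
  qed
  have ne: "w'' \<noteq> w"
  proof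
    assume "w'' = w"
    hence "y = x" using matching_uniq2[OF ismM' yw'' ] xw by simp
    thus False using pr prefers_irrefl[of p w x, OF distW[OF wW]] by simp
  qed
  have s1: "w'' \<in> set (p y)" using matching_acc[OF ismM' yw''] agree[OF yS] by simp
  have "prefers p y w'' w" using prefers_total[of w'' p y w, OF s1 _ ne] acc npr by blast
  thus ?thesis using yw'' unfolding w''_def by blast
qed

lemma inv_walk:
  assumes x0U: "x0 \<in> U" and un: "\<not> matched M x0" and mt: "matched M' x0"
  shows "(\<forall>i<k. walk M M' x0 i \<notin> S \<and> mate M' (walk M M' x0 i) \<notin> S) \<Longrightarrow>
     InvA U M M' x0 k \<and> (walk M M' x0 k \<notin> S \<longrightarrow> InvB p M M' x0 k)"
proof (induction k)
  case 0
  have "(x0, mate M' x0) \<in> M'" using matched_man[OF ismM' inst x0U mt] .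
  thus ?case using x0U un unfolding InvA_def InvB_def by simp
next
  case (Suc k)
  define x where "x = walk M M' x0 k"
  define w where "w = mate M' x"
  have hk: "x \<notin> S" "w \<notin> S" using Suc.prems unfolding x_def w_def by auto
  have IA: "InvA U M M' x0 k" and IB: "InvB p M M' x0 k" using Suc.IH Suc.prems hk(1) unfolding x_def by auto
  have xU: "x \<in> U" using IA unfolding InvA_def x_def by blast
  have xw: "(x, w) \<in> M'" using IB unfolding InvB_def x_def w_def by blast
  have A: "\<not> matched M x \<or> (\<exists>w0. (x, w0) \<in> M \<and> prefers p x w w0)"
  proof (cases k)
    case 0 thus ?thesis using IA unfolding InvA_def x_def by simp
  next
    case (Suc j)
    thus ?thesis using IA IB unfolding InvA_def InvB_def x_def w_def by blast
  qed
  have s1: "(mateW M w, w) \<in> M \<and> prefers p w (mateW M w) x" using step1[OF xU xw hk A] .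
  have wk: "walk M M' x0 (Suc k) = mateW M w" unfolding w_def x_def by simp
  have yU: "mateW M w \<in> U" using matching_sub[OF ismM] s1 by blast
  have IA': "InvA U M M' x0 (Suc k)" unfolding InvA_def using wk yU s1 unfolding w_def x_def by simp
  have IB': "InvB p M M' x0 (Suc k)" if yS: "walk M M' x0 (Suc k) \<notin> S"
  proof -
    have "(mateW M w, mate M' (mateW M w)) \<in> M' \<and> prefers p (mateW M w) (mate M' (mateW M w)) w"
      using step2[of "mateW M w" w x] s1 xw yS wk hk(2) by simp
    thus ?thesis unfolding InvB_def using wk unfolding w_def x_def by simp
  qed
  show ?case using IA' IB' by blast
qed


lemma walk_back:
  "(\<forall>i'\<le>i. InvA U M M' x0 i') \<Longrightarrow> (\<forall>i'<i. InvB p M M' x0 i') \<Longrightarrow>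
   (\<forall>j'\<le>j. InvA U M M' y0 j') \<Longrightarrow> (\<forall>j'<j. InvB p M M' y0 j') \<Longrightarrow>
   walk M M' x0 i = walk M M' y0 j \<Longrightarrow> x0 = y0 \<and> i = j"
proof (induction i arbitrary: j)
  case 0
  show ?case
  proof (cases j)
    case 0 thus ?thesis using "0.prems"(5) by simp
  next
    case (Suc j')
    have "(walk M M' y0 j, mate M' (walk M M' y0 j')) \<in> M" using "0.prems"(3) Suc unfolding InvA_def by blast
    hence "matched M x0" using "0.prems"(5) unfolding matched_def by auto
    moreover have "\<not> matched M x0" using "0.prems"(1) unfolding InvA_def by auto
    ultimately show ?thesis by blast
  qed
next
  case (Suc i')
  show ?case
  proof (cases j)
    case 0
    have "(walk M M' x0 (Suc i'), mate M' (walk M M' x0 i')) \<in> M" using Suc.prems(1) unfolding InvA_def by blast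
    hence "matched M y0" using Suc.prems(5) 0 unfolding matched_def by auto
    moreover have "\<not> matched M y0" using Suc.prems(3) unfolding InvA_def by auto
    ultimately show ?thesis by blast
  next
    case (Suc j')
    have a1: "(walk M M' x0 (Suc i'), mate M' (walk M M' x0 i')) \<in> M" using Suc.prems(1) unfolding InvA_def by blast
    have a2: "(walk M M' y0 (Suc j'), mate M' (walk M M' y0 j')) \<in> M" using Suc.prems(3) Suc unfolding InvA_def by blast
    have e1: "mate M' (walk M M' x0 i') = mate M' (walk M M' y0 j')"
      using matching_uniq1[OF ismM a1] a2 Suc.prems(5) Suc by simp
    have b1: "(walk M M' x0 i', mate M' (walk M M' x0 i')) \<in> M'" using Suc.prems(2) unfolding InvB_def by blast
    have b2: "(walk M M' y0 j', mate M' (walk M M' y0 j')) \<in> M'" using Suc.prems(4) Suc unfolding InvB_def by blast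
    have e2: "walk M M' x0 i' = walk M M' y0 j'" using matching_uniq2[OF ismM' b1] b2 e1 by simp
    have "x0 = y0 \<and> i' = j'"
      using Suc.IH[of j'] Suc.prems(1-4) Suc e2 by auto
    thus ?thesis using Suc by simp
  qed
qed

lemma hit_exists:
  assumes x0U: "x0 \<in> U" and un: "\<not> matched M x0" and mt: "matched M' x0"
  shows "\<exists>k. (walk M M' x0 k \<in> S \<or> mate M' (walk M M' x0 k) \<in> S) \<and>
    (\<forall>i\<le>k. InvA U M M' x0 i) \<and> (\<forall>i<k. InvB p M M' x0 i) \<and>
    (walk M M' x0 k \<notin> S \<longrightarrow> InvB p M M' x0 k)"
proof -
  define H where "H = (\<lambda>k. walk M M' x0 k \<in> S \<or> mate M' (walk M M' x0 k) \<in> S)"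
  have ex: "\<exists>k. H k"
  proof (rule ccontr)
    assume "\<not> (\<exists>k. H k)"
    hence nh: "\<forall>i. walk M M' x0 i \<notin> S \<and> mate M' (walk M M' x0 i) \<notin> S" unfolding H_def by blast
    have IAB: "InvA U M M' x0 k \<and> InvB p M M' x0 k" for k
      using inv_walk[OF x0U un mt, of k] nh by blast
    have "inj (walk M M' x0)"
    proof (rule injI)
      fix i j assume "walk M M' x0 i = walk M M' x0 j"
      thus "i = j" using walk_back[of i x0 j x0] IAB by blast
    qed
    hence "infinite (range (walk M M' x0))" using finite_imageD[of "walk M M' x0" UNIV] by auto
    moreover have "range (walk M M' x0) \<subseteq> U" using IAB unfolding InvA_def by blast
    moreover have "finite U" using inst unfolding smi_instance_def by blast
    ultimately show False using finite_subset by blast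
  qed
  then obtain k where hk: "H k" and mn: "\<forall>i<k. \<not> H i" using exists_least_iff[of H] by blast
  have I: "InvA U M M' x0 i \<and> (walk M M' x0 i \<notin> S \<longrightarrow> InvB p M M' x0 i)" if "i \<le> k" for i
  proof -
    have "\<forall>i'<i. walk M M' x0 i' \<notin> S \<and> mate M' (walk M M' x0 i') \<notin> S"
      using mn that unfolding H_def by auto
    thus ?thesis using inv_walk[OF x0U un mt, of i] by blast
  qed
  have "\<forall>i<k. InvB p M M' x0 i"
  proof (intro allI impI)
    fix i assume "i < k"
    hence "walk M M' x0 i \<notin> S" using mn unfolding H_def by blast
    thus "InvB p M M' x0 i" using I[of i] \<open>i < k\<close> by simp
  qed
  thus ?thesis using hk I unfolding H_def by blast
qed

end



lemma is_matching_swap: "is_matching U W p M \<Longrightarrow> is_matching W U p (converse M)"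
  unfolding is_matching_def mutually_acceptable_def by blast
lemma matched_swap: "matched (converse M) a = matched M a"
  unfolding matched_def by auto
lemma blocks_swap: "blocks W U p (converse M) w m = blocks U W p M m w"
  unfolding blocks_def matched_swap mutually_acceptable_def by auto
lemma stable_swap: "stable U W p M \<Longrightarrow> stable W U p (converse M)"
  unfolding stable_def by (auto simp: blocks_swap dest: is_matching_swap)
lemma ma_swap_sub: "ma U W p \<subseteq> ma W U p"
proof
  fix a assume "a \<in> ma U W p"
  then obtain M where "stable U W p M" "matched M a" unfolding ma_def by blast
  hence "stable W U p (converse M)" "matched (converse M) a" using stable_swap by (auto simp: matched_swap)
  thus "a \<in> ma W U p" unfolding ma_def by blast
qed
lemma ma_swap: "ma W U p = ma U W p" using ma_swap_sub[of U W p] ma_swap_sub[of W U p] by blast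
lemma smi_swap: "smi_instance U W p \<Longrightarrow> smi_instance W U p"
  unfolding smi_instance_def by blast

lemma men_part:
  assumes inst: "smi_instance U W pref" and inst': "smi_instance U W pref'"
    and ag: "\<And>a. a \<notin> {astar} \<Longrightarrow> pref' a = pref a"
    and m1U: "m1 \<in> U" and m2U: "m2 \<in> U"
    and n1: "m1 \<notin> ma U W pref" and y1: "m1 \<in> ma U W pref'"
    and n2: "m2 \<notin> ma U W pref" and y2: "m2 \<in> ma U W pref'"
  shows "m1 = m2"
proof -
  obtain M0 where M0: "stable U W pref M0" using stable_exists[OF inst] by blast
  have u1: "\<not> matched M0 m1" using n1 M0 unfolding ma_def by blast
  have u2: "\<not> matched M0 m2" using n2 M0 unfolding ma_def by blast
  obtain M1 where M1: "stable U W pref' M1" "matched M1 m1" using y1 unfolding ma_def by blast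
  obtain M2 where M2: "stable U W pref' M2" "matched M2 m2" using y2 unfolding ma_def by blast
  have ag0: "\<And>a. a \<notin> {} \<Longrightarrow> pref' a = pref' a" by simp
  have mm2: "matched M1 m2"
  proof (rule ccontr)
    assume "\<not> matched M1 m2"
    from hit_exists[OF inst' inst' ag0 M1(1) M2(1) m2U this M2(2)] show False by blast
  qed
  have disj: "U \<inter> W = {}" using inst unfolding smi_instance_def by blast
  have ism1: "is_matching U W pref' M1" using M1(1) unfolding stable_def by blast
  from hit_exists[OF inst inst' ag M0 M1(1) m1U u1 M1(2)] obtain k1 where
    h1: "walk M0 M1 m1 k1 \<in> {astar} \<or> mate M1 (walk M0 M1 m1 k1) \<in> {astar}"
      "\<forall>i\<le>k1. InvA U M0 M1 m1 i" "\<forall>i<k1. InvB pref M0 M1 m1 i"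
      "walk M0 M1 m1 k1 \<notin> {astar} \<longrightarrow> InvB pref M0 M1 m1 k1" by blast
  from hit_exists[OF inst inst' ag M0 M1(1) m2U u2 mm2] obtain k2 where
    h2: "walk M0 M1 m2 k2 \<in> {astar} \<or> mate M1 (walk M0 M1 m2 k2) \<in> {astar}"
      "\<forall>i\<le>k2. InvA U M0 M1 m2 i" "\<forall>i<k2. InvB pref M0 M1 m2 i"
      "walk M0 M1 m2 k2 \<notin> {astar} \<longrightarrow> InvB pref M0 M1 m2 k2" by blast
  define a where "a = walk M0 M1 m1 k1"
  define b where "b = walk M0 M1 m2 k2"
  have aU: "a \<in> U" using h1(2) unfolding InvA_def a_def by blast
  have bU: "b \<in> U" using h2(2) unfolding InvA_def b_def by blast
  have eq: "a = b"
  proof (cases "a = astar")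
    case True
    show ?thesis
    proof (rule ccontr)
      assume "a \<noteq> b"
      hence "b \<noteq> astar" using True by simp
      hence "(b, mate M1 b) \<in> M1" "mate M1 b = astar" using h2(1,4) unfolding InvB_def b_def by auto
      hence "astar \<in> W" using matching_sub[OF ism1] by metis
      thus False using True aU disj by blast
    qed
  next
    case False
    hence ma1: "(a, mate M1 a) \<in> M1" "mate M1 a = astar" using h1(1,4) unfolding InvB_def a_def by auto
    hence aW: "astar \<in> W" using matching_sub[OF ism1] by metis
    hence "b \<noteq> astar" using bU disj by blast
    hence "(b, mate M1 b) \<in> M1" "mate M1 b = astar" using h2(1,4) unfolding InvB_def b_def by auto
    thus ?thesis using matching_uniq2[OF ism1] ma1 by metis
  qed
  have "m1 = m2 \<and> k1 = k2"
    using walk_back[OF inst inst' ag M0 M1(1) h1(2,3) h2(2,3)] eq unfolding a_def b_def by blast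
  thus ?thesis by blast
qed


theorem mainTheorem9:
  fixes U W :: "'a set" and pref :: "'a \<Rightarrow> 'a list" and astar :: 'a and L :: "'a list"
  assumes "smi_instance U W pref"
    and "astar \<in> U \<union> W"
    and "distinct L"
    and "set L \<subseteq> (if astar \<in> U then W else U)"
  shows "(\<forall>m1\<in>U. \<forall>m2\<in>U.
            m1 \<notin> ma U W pref \<and> m1 \<in> ma U W (pref(astar := L)) \<and>
            m2 \<notin> ma U W pref \<and> m2 \<in> ma U W (pref(astar := L)) \<longrightarrow> m1 = m2) \<and>
         (\<forall>w1\<in>W. \<forall>w2\<in>W.
            w1 \<notin> ma U W pref \<and> w1 \<in> ma U W (pref(astar := L)) \<and>
            w2 \<notin> ma U W pref \<and> w2 \<in> ma U W (pref(astar := L)) \<longrightarrow> w1 = w2)"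
proof -
  have inst: "smi_instance U W pref" using assms(1) .
  have disj: "U \<inter> W = {}" using inst unfolding smi_instance_def by blast
  have inst': "smi_instance U W (pref(astar := L))"
    unfolding smi_instance_def
  proof (intro conjI ballI)
    show "finite U" "finite W" "U \<inter> W = {}" using inst unfolding smi_instance_def by blast+
  next
    fix m assume mU: "m \<in> U"
    show "distinct ((pref(astar := L)) m)"
    proof (cases "m = astar")
      case True thus ?thesis using assms(3) by simp
    next
      case False thus ?thesis using inst mU unfolding smi_instance_def by simp
    qed
    show "set ((pref(astar := L)) m) \<subseteq> W"
    proof (cases "m = astar")
      case True thus ?thesis using assms(4) mU by simp
    next
      case False thus ?thesis using inst mU unfolding smi_instance_def by simp
    qed
  next
    fix w assume wW: "w \<in> W"
    show "distinct ((pref(astar := L)) w)"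
    proof (cases "w = astar")
      case True thus ?thesis using assms(3) by simp
    next
      case False thus ?thesis using inst wW unfolding smi_instance_def by simp
    qed
    show "set ((pref(astar := L)) w) \<subseteq> U"
    proof (cases "w = astar")
      case True
      hence "astar \<notin> U" using wW disj by blast
      thus ?thesis using assms(4) True by simp
    next
      case False thus ?thesis using inst wW unfolding smi_instance_def by simp
    qed
  qed
  have ag: "\<And>a. a \<notin> {astar} \<Longrightarrow> (pref(astar := L)) a = pref a" by simp
  show ?thesis
  proof (intro conjI ballI impI)
    fix m1 m2 assume "m1 \<in> U" "m2 \<in> U"
      "m1 \<notin> ma U W pref \<and> m1 \<in> ma U W (pref(astar := L)) \<and>
            m2 \<notin> ma U W pref \<and> m2 \<in> ma U W (pref(astar := L))"
    thus "m1 = m2" using men_part[OF inst inst' ag] by blast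
  next
    fix w1 w2 assume "w1 \<in> W" "w2 \<in> W"
      "w1 \<notin> ma U W pref \<and> w1 \<in> ma U W (pref(astar := L)) \<and>
            w2 \<notin> ma U W pref \<and> w2 \<in> ma U W (pref(astar := L))"
    hence "w1 \<notin> ma W U pref \<and> w1 \<in> ma W U (pref(astar := L)) \<and>
            w2 \<notin> ma W U pref \<and> w2 \<in> ma W U (pref(astar := L))"
      by (simp add: ma_swap)
    thus "w1 = w2" using men_part[OF smi_swap[OF inst] smi_swap[OF inst'] ag] \<open>w1 \<in> W\<close> \<open>w2 \<in> W\<close> by blast
  qed
qed

end
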